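(* Let $X$ be a positive random variable with law $\mathbb{P}$. Suppose 1. there exist $\sigma\in(0,1]$ and $C_\sigma<\infty$ such that $\mathbb{P}(X\in I)\le C_\sigma|I|^\sigma$ for all Borel sets $I\subset[0,\infty)$ with Lebesgue measure $|I|\le1$; 2. there exists $\tau>0$ with $\mathbb{E}[X^\tau]<\infty$. Then for all $\alpha\in(0,1/2)$, $$\delta(X,\alpha)\ge\min\Big\{1,\Big(\frac{1-2\alpha}{C_\sigma}\Big)^{1/\sigma}\Big\}\Big(\frac{\alpha}{\mathbb{E}[X^\tau]}\Big)^{1/\tau}.$$
   Context: For $\alpha\in(0,1/2]$ the relative $\alpha$-width of a positive random variable $X$ is $\delta(X,\alpha):=1-\xi_-(X,\alpha)/\xi_+(X,\alpha)$, where $\xi_-(X,\alpha):=\sup\{\xi:\mathbb{P}(X<\xi)\le\alpha\}$ and $\xi_+(X,\alpha):=\inf\{\xi:\mathbb{P}(X>\xi)\le\alpha\}$. *)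

theory Defs
  imports "HOL-Probability.Probability"
begin

definition xi_minus :: "'a measure \<Rightarrow> ('a \<Rightarrow> real) \<Rightarrow> real \<Rightarrow> real" where
  "xi_minus M X \<alpha> = Sup {\<xi>. measure M {\<omega> \<in> space M. X \<omega> < \<xi>} \<le> \<alpha>}"

definition xi_plus :: "'a measure \<Rightarrow> ('a \<Rightarrow> real) \<Rightarrow> real \<Rightarrow> real" where
  "xi_plus M X \<alpha> = Inf {\<xi>. measure M {\<omega> \<in> space M. X \<omega> > \<xi>} \<le> \<alpha>}"

definition rel_width :: "'a measure \<Rightarrow> ('a \<Rightarrow> real) \<Rightarrow> real \<Rightarrow> real" where
  "rel_width M X \<alpha> = 1 - xi_minus M X \<alpha> / xi_plus M X \<alpha>"

end

theory Submission
  imports Defs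
begin

theorem lemma3p8:
  fixes M :: "'a measure" and X :: "'a \<Rightarrow> real" and \<sigma> C \<tau> :: real
  assumes "prob_space M"
    and "X \<in> borel_measurable M"
    and "\<forall>\<omega>\<in>space M. X \<omega> > 0"
    and "0 < \<sigma>" and "\<sigma> \<le> 1"
    and "\<forall>I. I \<in> sets borel \<and> I \<subseteq> {0..} \<and> emeasure lborel I \<le> 1 \<longrightarrow>
           measure M {\<omega> \<in> space M. X \<omega> \<in> I} \<le> C * (measure lborel I) powr \<sigma>"
    and "0 < \<tau>"
    and "integrable M (\<lambda>\<omega>. X \<omega> powr \<tau>)"
  shows "\<forall>\<alpha>. 0 < \<alpha> \<and> \<alpha> < 1/2 \<longrightarrow>
           rel_width M X \<alpha> \<ge>
             min 1 (((1 - 2*\<alpha>) / C) powr (1/\<sigma>)) *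
             (\<alpha> / (\<integral>\<omega>. X \<omega> powr \<tau> \<partial>M)) powr (1/\<tau>)"
proof (intro allI impI)
  fix \<alpha> :: real
  assume a: "0 < \<alpha> \<and> \<alpha> < 1/2"
  interpret P: prob_space M by (rule assms(1))
  note Xm[measurable] = assms(2)
  define E where "E = (\<integral>\<omega>. X \<omega> powr \<tau> \<partial>M)"
  define Am where "Am = {\<xi>. measure M {\<omega> \<in> space M. X \<omega> < \<xi>} \<le> \<alpha>}"
  define Ap where "Ap = {\<xi>. measure M {\<omega> \<in> space M. X \<omega> > \<xi>} \<le> \<alpha>}"
  define m where "m = min 1 (((1 - 2*\<alpha>) / C) powr (1/\<sigma>))"
  define m0 where "m0 = min 1 (if C > 0 then ((1 - 2*\<alpha>) / C) powr (1/\<sigma>) else 1)"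
  have m0pos: "m0 > 0" using a unfolding m0_def by auto
  have mm0: "m \<le> m0" unfolding m_def m0_def by auto
  have m_nn: "0 \<le> m" unfolding m_def by auto
  have Epos: "E > 0"
  proof -
    have nn: "AE x in M. 0 \<le> X x powr \<tau>" by auto
    have "E \<ge> 0" unfolding E_def by (rule integral_nonneg_AE[OF nn])
    moreover have "E \<noteq> 0"
    proof
      assume "E = 0"
      then have "AE x in M. X x powr \<tau> = 0"
        using integral_nonneg_eq_0_iff_AE[OF assms(8) nn] unfolding E_def by simp
      then have "AE x in M. False"
        by (rule AE_mp) (rule AE_I2, use assms(3) in force)
      then show False using P.AE_False by simp
    qed
    ultimately show ?thesis by simp
  qed
  define t where "t = (E / \<alpha>) powr (1/\<tau>)"
  have tpos: "t > 0" unfolding t_def using Epos a by simp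
  have ttau: "t powr \<tau> = E / \<alpha>"
    unfolding t_def using Epos a assms(7) by (simp add: powr_powr)
  have tAp: "t \<in> Ap"
  proof -
    have "{\<omega> \<in> space M. X \<omega> > t} \<subseteq> {\<omega> \<in> space M. X \<omega> powr \<tau> \<ge> E / \<alpha>}"
    proof safe
      fix \<omega> assume "\<omega> \<in> space M" "t < X \<omega>"
      then have "t powr \<tau> \<le> X \<omega> powr \<tau>"
        using tpos assms(7) by (intro powr_mono2) auto
      then show "E / \<alpha> \<le> X \<omega> powr \<tau>" using ttau by simp
    qed
    then have "measure M {\<omega> \<in> space M. X \<omega> > t} \<le> measure M {\<omega> \<in> space M. X \<omega> powr \<tau> \<ge> E / \<alpha>}"
      by (intro P.finite_measure_mono) auto
    also have "\<dots> \<le> E / (E / \<alpha>)"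
      unfolding E_def
      by (rule integral_Markov_inequality_measure[OF assms(8), where A="space M"])
         (use Epos a in \<open>auto simp: E_def\<close>)
    also have "\<dots> = \<alpha>" using Epos a by simp
    finally show ?thesis unfolding Ap_def by simp
  qed
  have zAm: "0 \<in> Am"
  proof -
    have "{\<omega> \<in> space M. X \<omega> < 0} = {}" using assms(3) by force
    then have "measure M {\<omega> \<in> space M. X \<omega> < 0} = 0" by (simp only: measure_empty)
    then show ?thesis unfolding Am_def using a by simp
  qed
  have key: "a \<le> b \<and> m0 \<le> b - a" if aA: "a \<in> Am" and bA: "b \<in> Ap" for a b
  proof -
    define a' where "a' = max a 0"
    have a'A: "a' \<in> Am" using aA zAm unfolding a'_def by (cases "a \<le> 0") (auto simp: max_def)
    let ?L = "{\<omega> \<in> space M. X \<omega> < a'}"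
    let ?R = "{\<omega> \<in> space M. X \<omega> > b}"
    let ?J = "{\<omega> \<in> space M. X \<omega> \<in> {a'..b}}"
    have "space M = ?L \<union> ?R \<union> ?J" by auto
    then have "1 = measure M (?L \<union> ?R \<union> ?J)" using P.prob_space by simp
    also have "\<dots> \<le> measure M (?L \<union> ?R) + measure M ?J"
      by (intro measure_Un_le) auto
    also have "\<dots> \<le> measure M ?L + measure M ?R + measure M ?J"
      using measure_Un_le[of ?L M ?R] by auto
    finally have J: "1 - 2 * \<alpha> \<le> measure M ?J"
      using a'A bA unfolding Am_def Ap_def by simp
    have ab: "a' \<le> b"
    proof (rule ccontr)
      assume "\<not> a' \<le> b"
      then have "?J = {}" by auto
      then have "measure M ?J = 0" by (simp only: measure_empty)
      then show False using J a by linarith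
    qed
    have "m0 \<le> b - a'"
    proof (cases "b - a' \<le> 1")
      case True
      have "a' \<ge> 0" unfolding a'_def by simp
      then have "measure M ?J \<le> C * (measure lborel {a'..b}) powr \<sigma>"
        using assms(6) True ab by (intro assms(6)[rule_format]) (auto simp: ennreal_leI)
      then have Jle: "1 - 2*\<alpha> \<le> C * (b - a') powr \<sigma>" using J ab by simp
      have Cpos: "C > 0"
      proof (rule ccontr)
        assume "\<not> C > 0"
        then have "C * (b - a') powr \<sigma> \<le> 0"
          by (simp add: mult_nonpos_nonneg)
        then show False using Jle a by simp
      qed
      have "(1 - 2*\<alpha>) / C \<le> (b - a') powr \<sigma>" using Jle Cpos by (simp add: field_simps)
      then have "((1 - 2*\<alpha>) / C) powr (1/\<sigma>) \<le> ((b - a') powr \<sigma>) powr (1/\<sigma>)"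
        using a Cpos assms(4) by (intro powr_mono2) auto
      also have "\<dots> = b - a'" using ab assms(4) by (simp add: powr_powr)
      finally show ?thesis unfolding m0_def using Cpos by simp
    next
      case False
      then show ?thesis unfolding m0_def by simp
    qed
    then show ?thesis using ab unfolding a'_def by (simp add: max_def split: if_splits)
  qed
  have neAm: "Am \<noteq> {}" using zAm by auto
  have neAp: "Ap \<noteq> {}" using tAp by auto
  have bddA: "bdd_above Am" using key tAp by (auto intro!: bdd_aboveI[of _ t])
  have bddB: "bdd_below Ap" using key zAm by (auto intro!: bdd_belowI[of _ 0])
  have xm_def': "xi_minus M X \<alpha> = Sup Am" unfolding xi_minus_def Am_def by simp
  have xp_def': "xi_plus M X \<alpha> = Inf Ap" unfolding xi_plus_def Ap_def by simp
  have xm0: "Sup Am \<ge> 0" using cSup_upper[OF zAm bddA] .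
  have xpt: "Inf Ap \<le> t" using cInf_lower[OF tAp bddB] .
  have d: "m0 \<le> Inf Ap - Sup Am"
  proof (rule field_le_epsilon)
    fix e :: real assume e: "0 < e"
    obtain a where aA: "a \<in> Am" and "Sup Am - e/2 < a"
      using less_cSup_iff[OF neAm bddA, of "Sup Am - e/2"] e by auto
    moreover obtain b where bA: "b \<in> Ap" and "b < Inf Ap + e/2"
      using cInf_less_iff[OF neAp bddB, of "Inf Ap + e/2"] e by auto
    ultimately show "m0 \<le> Inf Ap - Sup Am + e" using key[OF aA bA] by linarith
  qed
  have xppos: "Inf Ap > 0" using d m0pos xm0 by linarith
  have "rel_width M X \<alpha> = (Inf Ap - Sup Am) / Inf Ap"
    unfolding rel_width_def xm_def' xp_def' using xppos by (simp add: field_simps)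
  also have "\<dots> \<ge> m / t"
  proof -
    have "m / t \<le> m / Inf Ap" using m_nn xppos xpt by (intro divide_left_mono) auto
    also have "\<dots> \<le> (Inf Ap - Sup Am) / Inf Ap"
      using mm0 d xppos by (intro divide_right_mono) auto
    finally show ?thesis .
  qed
  finally have "m / t \<le> rel_width M X \<alpha>" .
  moreover have "m / t = m * (\<alpha> / E) powr (1/\<tau>)"
  proof -
    have "(\<alpha> / E) powr (1/\<tau>) = \<alpha> powr (1/\<tau>) / E powr (1/\<tau>)"
      using a Epos by (simp add: powr_divide)
    moreover have "t = E powr (1/\<tau>) / \<alpha> powr (1/\<tau>)"
      unfolding t_def using a Epos by (simp add: powr_divide)
    ultimately show ?thesis by simp
  qed
  ultimately show "m * (\<alpha> / (\<integral>\<omega>. X \<omega> powr \<tau> \<partial>M)) powr (1/\<tau>) \<le> rel_width M X \<alpha>"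
    unfolding m_def E_def by simp
qed

end
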